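(* Let $X$ be a separable real Banach space with property (au$^*$). Then $X^*$ has no proper closed norming subspace; i.e. if $M\subseteq X^*$ is a norm-closed linear subspace such that $\|x\|=\sup\{|m(x)|: m\in M,\ \|m\|\le 1\}$ for every $x\in X$, then $M=X^*$. Consequently $X^*$ is separable.
   Context: All Banach spaces are real. A separable Banach space $X$ has property (au$^*$) if $\lim_{n\to\infty}(\|x^*+x_n^*\|-\|x^*-x_n^*\|)=0$ whenever $x^*\in X^*$ and $(x_n^* )_{n\ge1}$ is a weak$^*$-null sequence in $X^*$. *)

theory Defs
  imports "HOL-Analysis.Analysis"
begin

(*The dual of a real Banach space 'a is the type 'a =>L real of bounded linear
functionals with the operator norm. A sequence in the dual is weak*-null if it converges
to 0 pointwise on 'a. *)

definition weak_star_null :: "(nat \<Rightarrow> ('a::real_normed_vector \<Rightarrow>\<^sub>L real)) \<Rightarrow> bool" where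
  "weak_star_null f \<longleftrightarrow> (\<forall>x. (\<lambda>n. blinfun_apply (f n) x) \<longlonglongrightarrow> 0)"

definition property_au_star :: "'a::real_normed_vector itself \<Rightarrow> bool" where
  "property_au_star TYPE('a) \<longleftrightarrow>
     (\<forall>(g::'a \<Rightarrow>\<^sub>L real) f. weak_star_null f \<longrightarrow>
        (\<lambda>n. norm (g + f n) - norm (g - f n)) \<longlonglongrightarrow> 0)"

definition norming :: "('a::real_normed_vector \<Rightarrow>\<^sub>L real) set \<Rightarrow> bool" where
  "norming M \<longleftrightarrow>
     (\<forall>x::'a. norm x = Sup {\<bar>blinfun_apply m x\<bar> | m. m \<in> M \<and> norm m \<le> 1})"

end

theory Submission
  imports Defs
begin


lemma hb_ext:
  fixes G :: "('a::real_normed_vector \<times> real) set"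
  assumes G: "subspace G" and dom: "\<forall>(x,a)\<in>G. a \<le> norm x" and z: "z \<notin> fst ` G"
  shows "\<exists>G'. subspace G' \<and> (\<forall>(x,a)\<in>G'. a \<le> norm x) \<and> G \<subset> G'"
proof -
  have addG: "(y1 + y2, a1 + a2) \<in> G" if "(y1,a1) \<in> G" "(y2,a2) \<in> G" for y1 a1 y2 a2
    using subspace_add[OF G that] by simp
  have scG: "(r *\<^sub>R y, r * a) \<in> G" if "(y,a) \<in> G" for y a r
    using subspace_scale[OF G that, of r] by simp
  have zG: "(0,0) \<in> G" using subspace_0[OF G] by (simp add: zero_prod_def)
  define S where "S = {a - norm (y - z) | y a. (y,a) \<in> G}"
  define c where "c = Sup S"
  have ub: "a - norm (y - z) \<le> norm (y2 + z) - b" if "(y,a)\<in>G" "(y2,b)\<in>G" for y a y2 b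
  proof -
    have "a + b \<le> norm (y + y2)" using dom addG[OF that] by auto
    also have "y + y2 = (y - z) + (y2 + z)" by simp
    also have "norm \<dots> \<le> norm (y - z) + norm (y2 + z)" by (rule norm_triangle_ineq)
    finally show ?thesis by simp
  qed
  have Sne: "S \<noteq> {}" using zG unfolding S_def by blast
  have Sbdd: "bdd_above S" unfolding S_def bdd_above_def using ub[OF _ zG] by auto
  have c1: "a - norm (y - z) \<le> c" if "(y,a)\<in>G" for y a
    unfolding c_def by (rule cSup_upper[OF _ Sbdd]) (use that S_def in blast)
  have c2: "c \<le> norm (y + z) - b" if "(y,b)\<in>G" for y b
    unfolding c_def by (rule cSup_least[OF Sne]) (use ub that S_def in blast)
  define G' where "G' = {(y + t *\<^sub>R z, a + t * c) | y a t. (y,a) \<in> G}"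
  have "subspace G'"
    unfolding subspace_def
  proof (intro conjI ballI allI)
    show "0 \<in> G'" unfolding G'_def using zG
      by (auto simp: zero_prod_def intro!: exI[of _ 0])
  next
    fix p q assume "p \<in> G'" "q \<in> G'"
    then obtain y1 a1 t1 y2 a2 t2 where "p = (y1 + t1 *\<^sub>R z, a1 + t1 * c)" "(y1,a1)\<in>G"
      "q = (y2 + t2 *\<^sub>R z, a2 + t2 * c)" "(y2,a2)\<in>G" unfolding G'_def by blast
    hence "p + q = ((y1+y2) + (t1+t2) *\<^sub>R z, (a1+a2) + (t1+t2)*c)"
      by (simp add: algebra_simps scaleR_add_left)
    then show "p + q \<in> G'" unfolding G'_def using addG[OF \<open>(y1,a1)\<in>G\<close> \<open>(y2,a2)\<in>G\<close>] by blast
  next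
    fix r p assume "p \<in> G'"
    then obtain y1 a1 t1 where "p = (y1 + t1 *\<^sub>R z, a1 + t1 * c)" "(y1,a1)\<in>G"
      unfolding G'_def by blast
    hence "r *\<^sub>R p = (r *\<^sub>R y1 + (r*t1) *\<^sub>R z, r*a1 + (r*t1)*c)"
      by (simp add: algebra_simps scaleR_add_right)
    then show "r *\<^sub>R p \<in> G'" unfolding G'_def using scG[OF \<open>(y1,a1)\<in>G\<close>] by blast
  qed
  moreover have "(\<forall>(x,a)\<in>G'. a \<le> norm x)"
  proof (clarsimp simp: G'_def)
    fix y a t assume ya: "(y,a) \<in> G"
    show "a + t * c \<le> norm (y + t *\<^sub>R z)"
    proof (cases "t = 0")
      case True then show ?thesis using dom ya by auto
    next
      case False
      show ?thesis
      proof (cases "t > 0")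
        case True
        have "c \<le> norm ((1/t) *\<^sub>R y + z) - (1/t) * a" using c2[OF scG[OF ya, of "1/t"]] .
        hence "t * c \<le> t * norm ((1/t) *\<^sub>R y + z) - a" using True
          by (simp add: field_simps mult_left_mono)
        also have "t * norm ((1/t) *\<^sub>R y + z) = norm (t *\<^sub>R ((1/t) *\<^sub>R y + z))"
          using True by simp
        also have "t *\<^sub>R ((1/t) *\<^sub>R y + z) = y + t *\<^sub>R z"
          using True by (simp add: scaleR_add_right)
        finally show ?thesis by simp
      next
        case False2: False
        define s where "s = - t"
        have s: "s > 0" using False False2 s_def by auto
        have "(1/s) * a - norm ((1/s) *\<^sub>R y - z) \<le> c" using c1[OF scG[OF ya, of "1/s"]] .
        hence "a - s * norm ((1/s) *\<^sub>R y - z) \<le> s * c" using s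
          by (simp add: field_simps)
        also have "s * norm ((1/s) *\<^sub>R y - z) = norm (s *\<^sub>R ((1/s) *\<^sub>R y - z))"
          using s by simp
        also have "s *\<^sub>R ((1/s) *\<^sub>R y - z) = y + t *\<^sub>R z"
          using s by (simp add: scaleR_diff_right s_def)
        finally show ?thesis using s_def by simp
      qed
    qed
  qed
  moreover have "G \<subset> G'"
  proof
    show "G \<subseteq> G'" unfolding G'_def by (force intro: exI[of _ 0])
    have "(z, c) \<in> G'" proof -
      have "(z, c) = (0 + 1 *\<^sub>R z, 0 + 1 * c)" by simp
      then show ?thesis unfolding G'_def using zG by blast
    qed
    moreover have "(z, c) \<notin> G" using z by force
    ultimately show "G \<noteq> G'" by blast
  qed
  ultimately show ?thesis by blast
qed

lemma hb_norm:
  fixes x0 :: "'a::real_normed_vector"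
  shows "\<exists>\<phi>::'a \<Rightarrow>\<^sub>L real. norm \<phi> \<le> 1 \<and> blinfun_apply \<phi> x0 = norm x0"
proof -
  define A where "A = {G :: ('a \<times> real) set. subspace G \<and> (\<forall>(x,a)\<in>G. a \<le> norm x) \<and> (x0, norm x0) \<in> G}"
  have "span {(x0, norm x0)} \<in> A"
    unfolding A_def
  proof (intro CollectI conjI)
    show "subspace (span {(x0, norm x0)})" by (rule subspace_span)
    show "(x0, norm x0) \<in> span {(x0, norm x0)}" by (rule span_base) simp
    show "\<forall>(x,a)\<in>span {(x0, norm x0)}. a \<le> norm x"
    proof (clarsimp simp: span_singleton)
      fix k :: real show "k * norm x0 \<le> \<bar>k\<bar> * norm x0"
        by (rule mult_right_mono) auto
    qed
  qed
  hence Ane: "A \<noteq> {}" by blast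
  have "\<exists>M\<in>A. \<forall>X\<in>A. M \<subseteq> X \<longrightarrow> X = M"
  proof (rule subset_Zorn_nonempty[OF Ane])
    fix C assume Cne: "C \<noteq> {}" and ch: "subset.chain A C"
    hence CA: "C \<subseteq> A" and lin: "\<forall>X\<in>C. \<forall>Y\<in>C. X \<subseteq> Y \<or> Y \<subseteq> X"
      by (auto simp: subset_chain_def)
    show "\<Union>C \<in> A"
      unfolding A_def
    proof (intro CollectI conjI)
      show "subspace (\<Union>C)"
        unfolding subspace_def
      proof (intro conjI ballI allI)
        obtain X where "X \<in> C" using Cne by blast
        then show "0 \<in> \<Union>C" using CA subspace_0 unfolding A_def by blast
      next
        fix x y assume "x \<in> \<Union>C" "y \<in> \<Union>C"
        then obtain X Y where "X\<in>C" "Y\<in>C" "x\<in>X" "y\<in>Y" by blast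
        with lin have "x \<in> X \<union> Y" "y \<in> X \<union> Y" "X \<union> Y = X \<or> X \<union> Y = Y" by blast+
        moreover have "subspace X" "subspace Y" using CA \<open>X\<in>C\<close> \<open>Y\<in>C\<close> unfolding A_def by blast+
        ultimately have "x + y \<in> X \<union> Y" by (metis subspace_add)
        then show "x + y \<in> \<Union>C" using \<open>X\<in>C\<close> \<open>Y\<in>C\<close> by blast
      next
        fix c x assume "x \<in> \<Union>C"
        then obtain X where "X\<in>C" "x\<in>X" by blast
        moreover have "subspace X" using CA \<open>X\<in>C\<close> unfolding A_def by blast
        ultimately show "c *\<^sub>R x \<in> \<Union>C" by (meson UnionI subspace_scale)
      qed
      show "\<forall>(x,a)\<in>\<Union>C. a \<le> norm x" using CA unfolding A_def by blast
      show "(x0, norm x0) \<in> \<Union>C" using CA Cne unfolding A_def by blast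
    qed
  qed
  then obtain G where GA: "G \<in> A" and max: "\<And>X. X \<in> A \<Longrightarrow> G \<subseteq> X \<Longrightarrow> X = G" by blast
  have G: "subspace G" and dom: "\<forall>(x,a)\<in>G. a \<le> norm x" and x0G: "(x0, norm x0) \<in> G"
    using GA unfolding A_def by auto
  have full: "\<exists>a. (x,a) \<in> G" for x
  proof (rule ccontr)
    assume "\<nexists>a. (x, a) \<in> G"
    hence "x \<notin> fst ` G" by force
    from hb_ext[OF G dom this] obtain G' where "subspace G'" "\<forall>(x,a)\<in>G'. a \<le> norm x" "G \<subset> G'"
      by blast
    moreover have "G' \<in> A" using calculation x0G unfolding A_def by blast
    ultimately show False using max by blast
  qed
  have addG: "(y1 + y2, a1 + a2) \<in> G" if "(y1,a1) \<in> G" "(y2,a2) \<in> G" for y1 a1 y2 a2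
    using subspace_add[OF G that] by simp
  have scG: "(r *\<^sub>R y, r * a) \<in> G" if "(y,a) \<in> G" for y a r
    using subspace_scale[OF G that, of r] by simp
  have uniq: "a = b" if "(x,a) \<in> G" "(x,b) \<in> G" for x a b
  proof -
    have "(x + (-1) *\<^sub>R x, a + (-1) * b) \<in> G" by (rule addG[OF that(1) scG[OF that(2)]])
    hence "a - b \<le> 0" using dom by auto
    moreover have "(x + (-1) *\<^sub>R x, b + (-1) * a) \<in> G" by (rule addG[OF that(2) scG[OF that(1)]])
    hence "b - a \<le> 0" using dom by auto
    ultimately show ?thesis by simp
  qed
  define f where "f x = (THE a. (x,a) \<in> G)" for x
  have fG: "(x, f x) \<in> G" for x
    unfolding f_def using full[of x] uniq by (metis theI)
  have fadd: "f (x + y) = f x + f y" for x y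
    using uniq[OF fG addG[OF fG fG]] .
  have fsc: "f (r *\<^sub>R x) = r *\<^sub>R f x" for r x
    using uniq[OF fG scG[OF fG]] by simp
  have fle: "f x \<le> norm x" for x using dom fG by auto
  have fabs: "norm (f x) \<le> norm x" for x
  proof -
    have "f (-x) = - f x" using fsc[of "-1" x] by simp
    then have "- f x \<le> norm x" using fle[of "-x"] by simp
    then show ?thesis using fle[of x] by simp
  qed
  have bl: "bounded_linear f"
    by (rule bounded_linear_intro[where K=1]) (use fadd fsc fabs in auto)
  define \<phi> where "\<phi> = Blinfun f"
  have ap: "blinfun_apply \<phi> = f" unfolding \<phi>_def using bl by (rule bounded_linear_Blinfun_apply)
  have "norm \<phi> \<le> 1" by (rule norm_blinfun_bound) (use fabs ap in auto)
  moreover have "blinfun_apply \<phi> x0 = norm x0" using ap uniq[OF fG x0G] by simp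
  ultimately show ?thesis by blast
qed



lemma approx_fin:
  fixes M :: "('a::real_normed_vector \<Rightarrow>\<^sub>L real) set" and z :: "'a \<Rightarrow>\<^sub>L real" and x :: "nat \<Rightarrow> 'a"
  assumes M: "subspace M" and nm: "norming M" and z: "norm z \<le> 1" and e: "\<epsilon> > 0"
  shows "\<exists>m\<in>M. norm m \<le> 1 \<and> (\<Sum>k\<le>n. (blinfun_apply m (x k) - blinfun_apply z (x k))^2) < \<epsilon>"
proof -
  define B where "B = {m\<in>M. norm m \<le> 1}"
  define \<Phi> where "\<Phi> m = (\<Sum>k\<le>n. (blinfun_apply m (x k) - blinfun_apply z (x k))^2)" for m
  define \<delta> where "\<delta> = Inf (\<Phi> ` B)"
  have B0: "0 \<in> B" unfolding B_def using subspace_0[OF M] by simp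
  have Bne: "\<Phi> ` B \<noteq> {}" using B0 by blast
  have bdd: "bdd_below (\<Phi> ` B)" unfolding bdd_below_def \<Phi>_def
    by (rule exI[of _ 0]) (auto intro!: sum_nonneg)
  have Bneg: "- f \<in> B" if "f \<in> B" for f using that subspace_neg[OF M] unfolding B_def by auto
  have "\<delta> \<le> 0"
  proof (rule ccontr)
    assume "\<not> \<delta> \<le> 0" hence dpos: "\<delta> > 0" by simp
    define C where "C = 1 + (\<Sum>k\<le>n. (2*norm (x k))^2)"
    have Cpos: "C > 0" unfolding C_def by (smt (verit) sum_nonneg zero_le_power2)
    have Cb: "(\<Sum>k\<le>n. (blinfun_apply m' (x k) - blinfun_apply m (x k))^2) \<le> C"
      if "m \<in> B" "m' \<in> B" for m m'
    proof -
      have "(blinfun_apply m' (x k) - blinfun_apply m (x k))^2 \<le> (2*norm (x k))^2" for k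
      proof -
        have "\<bar>blinfun_apply m' (x k)\<bar> \<le> norm m' * norm (x k)" using norm_blinfun[of m' "x k"] by simp
        also have "\<dots> \<le> norm (x k)" using that(2) unfolding B_def by (simp add: mult_left_le_one_le)
        finally have 1: "\<bar>blinfun_apply m' (x k)\<bar> \<le> norm (x k)" .
        have "\<bar>blinfun_apply m (x k)\<bar> \<le> norm m * norm (x k)" using norm_blinfun[of m "x k"] by simp
        also have "\<dots> \<le> norm (x k)" using that(1) unfolding B_def by (simp add: mult_left_le_one_le)
        finally have 2: "\<bar>blinfun_apply m (x k)\<bar> \<le> norm (x k)" .
        have "\<bar>blinfun_apply m' (x k) - blinfun_apply m (x k)\<bar> \<le> 2 * norm (x k)" using 1 2 by linarith
        then show ?thesis by (metis abs_ge_zero power2_abs power_mono)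
      qed
      then have "(\<Sum>k\<le>n. (blinfun_apply m' (x k) - blinfun_apply m (x k))^2) \<le> (\<Sum>k\<le>n. (2*norm (x k))^2)"
        by (rule sum_mono)
      then show ?thesis unfolding C_def by simp
    qed
    define u where "u = min 1 (\<delta>/(2*C))"
    have u0: "u > 0" unfolding u_def using dpos Cpos by simp
    have u1: "u \<le> 1" unfolding u_def by simp
    have uC: "u * C \<le> \<delta>/2"
    proof -
      have "u \<le> \<delta>/(2*C)" unfolding u_def by simp
      hence "u * C \<le> \<delta>/(2*C) * C" by (rule mult_right_mono) (use Cpos in auto)
      also have "\<dots> = \<delta>/2" using Cpos by simp
      finally show ?thesis .
    qed
    define \<eta> where "\<eta> = u * \<delta> / 2"
    have eta0: "\<eta> > 0" unfolding \<eta>_def using u0 dpos by simp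
    have "Inf (\<Phi> ` B) < \<delta> + \<eta>" using eta0 \<delta>_def by simp
    then obtain m where mB: "m \<in> B" and mlt: "\<Phi> m < \<delta> + \<eta>"
      using cInf_lessD[OF Bne] by blast
    define a where "a k = blinfun_apply z (x k) - blinfun_apply m (x k)" for k
    define y where "y = (\<Sum>k\<le>n. a k *\<^sub>R x k)"
    have lin: "blinfun_apply f y = (\<Sum>k\<le>n. a k * blinfun_apply f (x k))" for f
      unfolding y_def by (simp add: blinfun.sum_right blinfun.scaleR_right)
    have key: "blinfun_apply m' y - blinfun_apply m y \<le> \<delta>/2" if m'B: "m' \<in> B" for m'
    proof -
      define d where "d k = blinfun_apply m' (x k) - blinfun_apply m (x k)" for k
      define A where "A = (\<Sum>k\<le>n. a k * d k)"
      define D where "D = (\<Sum>k\<le>n. (d k)^2)"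
      have AA: "A = blinfun_apply m' y - blinfun_apply m y"
        unfolding A_def d_def lin by (simp add: algebra_simps sum_subtractf)
      have DC: "D \<le> C" unfolding D_def d_def using Cb[OF mB m'B] .
      define mu where "mu = m + u *\<^sub>R (m' - m)"
      have muM: "mu \<in> M" unfolding mu_def using mB m'B unfolding B_def
        by (simp add: subspace_add subspace_scale subspace_diff M)
      have "mu = (1 - u) *\<^sub>R m + u *\<^sub>R m'" unfolding mu_def by (simp add: algebra_simps)
      hence "norm mu \<le> (1-u) * norm m + u * norm m'"
        using u0 u1 by (metis (no_types, lifting) abs_of_nonneg diff_ge_0_iff_ge less_eq_real_def norm_scaleR norm_triangle_le)
      also have "\<dots> \<le> (1-u) * 1 + u * 1"
        using mB m'B u0 u1 unfolding B_def by (intro add_mono mult_left_mono) auto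
      finally have "norm mu \<le> 1" by simp
      with muM have muB: "mu \<in> B" unfolding B_def by simp
      have "\<Phi> mu = (\<Sum>k\<le>n. (a k)^2 - 2*u*(a k * d k) + u^2 * (d k)^2)"
        unfolding \<Phi>_def mu_def a_def d_def
        by (rule sum.cong) (simp_all add: algebra_simps power2_eq_square blinfun.add_left blinfun.scaleR_left blinfun.diff_left)
      also have "\<dots> = \<Phi> m - 2*u*A + u^2 * D"
        unfolding \<Phi>_def A_def D_def a_def
        by (simp add: sum.distrib sum_subtractf sum_distrib_left power2_commute)
      finally have Phimu: "\<Phi> mu = \<Phi> m - 2*u*A + u^2 * D" .
      have "\<delta> \<le> \<Phi> mu" unfolding \<delta>_def by (rule cInf_lower) (use muB bdd in auto)
      hence "2*u*A < \<eta> + u^2 * C" using Phimu mlt DC u0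
        by (smt (verit) mult_left_mono zero_le_power2)
      hence "2*u*A < u * \<delta> / 2 + u * (u*C)" unfolding \<eta>_def by (simp add: power2_eq_square)
      also have "\<dots> \<le> u * \<delta> / 2 + u * (\<delta>/2)"
      proof -
        have "u*(u*C) \<le> u*(\<delta>/2)" by (rule mult_left_mono[OF uC]) (use u0 in simp)
        then show ?thesis by linarith
      qed
      finally have "2*u*A < u * \<delta>" by (simp add: mult.commute)
      hence "A < \<delta>/2" using u0 by simp
      then show ?thesis using AA by simp
    qed
    have ny: "norm y \<le> blinfun_apply m y + \<delta>/2"
    proof -
      have "norm y = Sup {\<bar>blinfun_apply f y\<bar> | f. f \<in> M \<and> norm f \<le> 1}"
        using nm unfolding norming_def by blast
      also have "\<dots> \<le> blinfun_apply m y + \<delta>/2"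
      proof (rule cSup_least)
        show "{\<bar>blinfun_apply f y\<bar> | f. f \<in> M \<and> norm f \<le> 1} \<noteq> {}" using B0 unfolding B_def by blast
      next
        fix r assume "r \<in> {\<bar>blinfun_apply f y\<bar> | f. f \<in> M \<and> norm f \<le> 1}"
        then obtain f where fB: "f \<in> B" and r: "r = \<bar>blinfun_apply f y\<bar>" unfolding B_def by blast
        have "blinfun_apply f y \<le> blinfun_apply m y + \<delta>/2" using key[OF fB] by simp
        moreover have "blinfun_apply (-f) y \<le> blinfun_apply m y + \<delta>/2" using key[OF Bneg[OF fB]] by simp
        ultimately show "r \<le> blinfun_apply m y + \<delta>/2" using r by (simp add: blinfun.minus_left)
      qed
      finally show ?thesis .
    qed
    have zy: "blinfun_apply z y \<le> norm y"
    proof -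
      have "blinfun_apply z y \<le> norm z * norm y" using norm_blinfun[of z y] by simp
      also have "\<dots> \<le> norm y" using z by (simp add: mult_left_le_one_le)
      finally show ?thesis .
    qed
    have "blinfun_apply z y - blinfun_apply m y = \<Phi> m"
      unfolding lin \<Phi>_def a_def by (simp add: sum_subtractf[symmetric] power2_eq_square algebra_simps)
    moreover have "\<delta> \<le> \<Phi> m" unfolding \<delta>_def by (rule cInf_lower) (use mB bdd in auto)
    ultimately show False using ny zy dpos by linarith
  qed
  then have "Inf (\<Phi> ` B) < \<epsilon>" using e \<delta>_def by simp
  then obtain m where "m \<in> B" "\<Phi> m < \<epsilon>" using cInf_lessD[OF Bne] by blast
  then show ?thesis unfolding B_def \<Phi>_def by blast
qed



lemma weak_star_seq:
  fixes M :: "('a::real_normed_vector \<Rightarrow>\<^sub>L real) set" and z :: "'a \<Rightarrow>\<^sub>L real" and d :: "nat \<Rightarrow> 'a"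
  assumes M: "subspace M" and nm: "norming M" and z: "norm z \<le> 1"
    and dense: "\<And>x e. e > 0 \<Longrightarrow> \<exists>k. dist x (d k) < e"
  shows "\<exists>ms. (\<forall>n. ms n \<in> M \<and> norm (ms n) \<le> 1) \<and> weak_star_null (\<lambda>n. ms n - z)"
proof -
  have "\<forall>n. \<exists>m\<in>M. norm m \<le> 1 \<and> (\<Sum>k\<le>n. (blinfun_apply m (d k) - blinfun_apply z (d k))^2) < (1/Suc n)^2"
    using approx_fin[OF M nm z] by simp
  then obtain ms where ms: "\<And>n. ms n \<in> M" "\<And>n. norm (ms n) \<le> 1"
    and msum: "\<And>n. (\<Sum>k\<le>n. (blinfun_apply (ms n) (d k) - blinfun_apply z (d k))^2) < (1/Suc n)^2"
    by metis
  have close: "\<bar>blinfun_apply (ms n) (d k) - blinfun_apply z (d k)\<bar> < 1/Suc n" if "k \<le> n" for n k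
  proof -
    have "(blinfun_apply (ms n) (d k) - blinfun_apply z (d k))^2
          \<le> (\<Sum>k\<le>n. (blinfun_apply (ms n) (d k) - blinfun_apply z (d k))^2)"
      by (rule member_le_sum) (use that in auto)
    also have "\<dots> < (1/Suc n)^2" by (rule msum)
    finally have "\<bar>blinfun_apply (ms n) (d k) - blinfun_apply z (d k)\<bar>^2 < (1/Suc n)^2" by simp
    then show ?thesis by (rule power_less_imp_less_base) simp
  qed
  have "weak_star_null (\<lambda>n. ms n - z)"
    unfolding weak_star_null_def
  proof (intro allI LIMSEQ_I)
    fix x :: 'a and r :: real assume r: "r > 0"
    obtain k where k: "dist x (d k) < r/4" using dense[of "r/4"] r by auto
    obtain N0 :: nat where N0: "4 / r < N0" using reals_Archimedean2 by blast
    define N where "N = max k N0"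
    show "\<exists>no. \<forall>n\<ge>no. norm (blinfun_apply (ms n - z) x - 0) < r"
    proof (intro exI allI impI)
      fix n assume n: "N \<le> n"
      have kn: "k \<le> n" using n N_def by simp
      have "1/Suc n < r/4"
      proof -
        have "4/r < Suc n" using N0 n N_def by linarith
        then have "4 < r * Suc n" using r by (simp add: field_simps)
        then show ?thesis using r by (simp add: field_simps)
      qed
      have e1: "\<bar>blinfun_apply (ms n) (x - d k)\<bar> \<le> norm (x - d k)"
      proof -
        have "\<bar>blinfun_apply (ms n) (x - d k)\<bar> \<le> norm (ms n) * norm (x - d k)"
          using norm_blinfun[of "ms n" "x - d k"] by simp
        also have "\<dots> \<le> norm (x - d k)" using ms(2)[of n] by (simp add: mult_left_le_one_le)
        finally show ?thesis .
      qed
      have e3: "\<bar>blinfun_apply z (x - d k)\<bar> \<le> norm (x - d k)"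
      proof -
        have "\<bar>blinfun_apply z (x - d k)\<bar> \<le> norm z * norm (x - d k)"
          using norm_blinfun[of z "x - d k"] by simp
        also have "\<dots> \<le> norm (x - d k)" using z by (simp add: mult_left_le_one_le)
        finally show ?thesis .
      qed
      have eq: "blinfun_apply (ms n - z) x = blinfun_apply (ms n) (x - d k)
           + (blinfun_apply (ms n) (d k) - blinfun_apply z (d k)) - blinfun_apply z (x - d k)"
        by (simp add: blinfun.diff_left blinfun.diff_right)
      have "norm (x - d k) < r/4" using k by (simp add: dist_norm)
      then show "norm (blinfun_apply (ms n - z) x - 0) < r"
      proof -
        have "\<bar>blinfun_apply (ms n - z) x\<bar> \<le> \<bar>blinfun_apply (ms n) (x - d k)\<bar>
           + \<bar>blinfun_apply (ms n) (d k) - blinfun_apply z (d k)\<bar> + \<bar>blinfun_apply z (x - d k)\<bar>"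
          unfolding eq by linarith
        then show ?thesis using e1 e3 close[OF kn] \<open>1/Suc n < r/4\<close> \<open>norm (x - d k) < r/4\<close> by simp
      qed
    qed
  qed
  then show ?thesis using ms by blast
qed

lemma riesz:
  fixes M :: "'b::real_normed_vector set"
  assumes M: "subspace M" and cl: "closed M" and ne: "M \<noteq> UNIV"
  shows "\<exists>z. norm z = 1 \<and> (\<forall>m\<in>M. 2/3 \<le> norm (z - m))"
proof -
  obtain y where y: "y \<notin> M" using ne by blast
  have Mne: "M \<noteq> {}" using subspace_0[OF M] by blast
  define \<delta> where "\<delta> = infdist y M"
  have dpos: "\<delta> > 0" unfolding \<delta>_def by (rule infdist_pos_not_in_closed[OF cl Mne y])
  have "Inf ((\<lambda>a. dist y a) ` M) < 3/2 * \<delta>" using dpos infdist_notempty[OF Mne, of y] \<delta>_def by simp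
  then obtain m0 where m0: "m0 \<in> M" "dist y m0 < 3/2 * \<delta>" using cInf_lessD[of "(\<lambda>a. dist y a) ` M"] Mne by blast
  define r where "r = norm (y - m0)"
  have rpos: "r > 0" unfolding r_def using m0 y by auto
  have rlt: "r < 3/2 * \<delta>" using m0 unfolding r_def by (simp add: dist_norm)
  define z where "z = (1/r) *\<^sub>R (y - m0)"
  have "norm z = 1" unfolding z_def r_def using rpos r_def by simp
  moreover have "2/3 \<le> norm (z - m)" if mM: "m \<in> M" for m
  proof -
    have inM: "m0 + r *\<^sub>R m \<in> M" using subspace_add[OF M m0(1) subspace_scale[OF M mM]] .
    have "\<delta> \<le> dist y (m0 + r *\<^sub>R m)" unfolding \<delta>_def by (rule infdist_le[OF inM])
    also have "\<dots> = norm (r *\<^sub>R (z - m))" unfolding z_def dist_norm using rpos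
      by (simp add: scaleR_diff_right algebra_simps)
    also have "\<dots> = r * norm (z - m)" using rpos by simp
    finally have "\<delta> \<le> r * norm (z - m)" .
    hence "2/3 * r \<le> r * norm (z - m)" using rlt by linarith
    then show ?thesis using rpos by simp
  qed
  ultimately show ?thesis by blast
qed

lemma part1:
  fixes M :: "('a::real_normed_vector \<Rightarrow>\<^sub>L real) set" and d :: "nat \<Rightarrow> 'a"
  assumes au: "property_au_star TYPE('a)"
    and dense: "\<And>x e. e > 0 \<Longrightarrow> \<exists>k. dist x (d k) < e"
    and M: "subspace M" and cl: "closed M" and nm: "norming M"
  shows "M = UNIV"
proof (rule ccontr)
  assume "M \<noteq> UNIV"
  from riesz[OF M cl this] obtain z where z1: "norm z = 1" and zd: "\<And>m. m \<in> M \<Longrightarrow> 2/3 \<le> norm (z - m)"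
    by blast
  obtain ms where ms: "\<And>n. ms n \<in> M" "\<And>n. norm (ms n) \<le> 1" and wn: "weak_star_null (\<lambda>n. ms n - z)"
    using weak_star_seq[OF M nm _ dense] z1 by force
  have lim: "(\<lambda>n. norm (z + (ms n - z)) - norm (z - (ms n - z))) \<longlonglongrightarrow> 0"
    using au wn unfolding property_au_star_def by blast
  have "norm (z + (ms n - z)) - norm (z - (ms n - z)) \<le> -1/3" for n
  proof -
    have hm: "(1/2) *\<^sub>R ms n \<in> M" using subspace_scale[OF M ms(1)] .
    have "z - (ms n - z) = 2 *\<^sub>R (z - (1/2) *\<^sub>R ms n)" by (simp add: algebra_simps scaleR_2)
    hence "norm (z - (ms n - z)) = 2 * norm (z - (1/2) *\<^sub>R ms n)" by simp
    moreover have "2/3 \<le> norm (z - (1/2) *\<^sub>R ms n)" using zd[OF hm] .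
    moreover have "norm (z + (ms n - z)) \<le> 1" using ms(2)[of n] by simp
    ultimately show ?thesis by linarith
  qed
  hence "0 \<le> (-1/3::real)" using LIMSEQ_le_const2[OF lim] by blast
  then show False by simp
qed



theorem proposition2p2:
  assumes "separable_space (euclidean :: 'a::banach topology)"
    and "property_au_star TYPE('a)"
  shows "(\<forall>M :: ('a \<Rightarrow>\<^sub>L real) set. subspace M \<and> closed M \<and> norming M \<longrightarrow> M = UNIV)
         \<and> separable_space (euclidean :: ('a \<Rightarrow>\<^sub>L real) topology)"
proof -
  obtain C :: "'a set" where C: "countable C" "closure C = UNIV"
    using assms(1) unfolding separable_space_def by auto
  have Cne: "C \<noteq> {}" using C(2) by auto
  define d where "d = from_nat_into C"
  have rd: "range d = C" unfolding d_def using Cne C(1) by simp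
  have dense: "\<exists>k. dist x (d k) < e" if e0: "e > 0" for x e
  proof -
    have "x \<in> closure C" using C(2) by simp
    then obtain y where "y \<in> C" "dist y x < e" using closure_approachable e0 by blast
    then show ?thesis using rd by (metis dist_commute rangeE)
  qed
  have P1: "\<forall>M :: ('a \<Rightarrow>\<^sub>L real) set. subspace M \<and> closed M \<and> norming M \<longrightarrow> M = UNIV"
    using part1[OF assms(2) dense] by blast
  have "\<forall>k. \<exists>\<phi>::'a \<Rightarrow>\<^sub>L real. norm \<phi> \<le> 1 \<and> blinfun_apply \<phi> (d k) = norm (d k)"
    using hb_norm by blast
  then obtain \<phi> where \<phi>1: "\<And>k. norm (\<phi> k) \<le> 1" and \<phi>2: "\<And>k. blinfun_apply (\<phi> k) (d k) = norm (d k)"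
    by metis
  define g where "g qs = sum_list (map (\<lambda>(q,k). real_of_rat q *\<^sub>R \<phi> k) qs)" for qs :: "(rat \<times> nat) list"
  define Q where "Q = range g"
  have Q0: "0 \<in> Q" unfolding Q_def g_def by (rule range_eqI[of _ _ "[]"]) simp
  have Qadd: "x + y \<in> Q" if xy: "x \<in> Q" "y \<in> Q" for x y
  proof -
    obtain a b where "x = g a" "y = g b" using xy unfolding Q_def by blast
    then have "x + y = g (a @ b)" unfolding g_def by simp
    then show ?thesis unfolding Q_def by blast
  qed
  have gsc: "g (map (\<lambda>(p,k). (q*p, k)) qs) = real_of_rat q *\<^sub>R g qs" for q qs
    unfolding g_def by (induction qs) (auto simp: of_rat_mult scaleR_add_right)
  have Qsc: "real_of_rat q *\<^sub>R x \<in> Q" if xQ: "x \<in> Q" for x q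
  proof -
    obtain a where "x = g a" using xQ unfolding Q_def by blast
    then have "real_of_rat q *\<^sub>R x = g (map (\<lambda>(p,k). (q*p, k)) a)" using gsc by simp
    then show ?thesis unfolding Q_def by blast
  qed
  have \<phi>Q: "\<phi> k \<in> Q" for k
  proof -
    have "\<phi> k = g [(1,k)]" unfolding g_def by simp
    then show ?thesis unfolding Q_def by blast
  qed
  have cadd1: "x + y \<in> closure Q" if "x \<in> closure Q" "y \<in> Q" for x y
  proof -
    have "closed ((\<lambda>x. x + y) -` closure Q)"
      by (rule continuous_closed_vimage) (auto intro!: continuous_intros)
    moreover have "Q \<subseteq> (\<lambda>x. x + y) -` closure Q" using Qadd that(2) closure_subset by blast
    ultimately have "closure Q \<subseteq> (\<lambda>x. x + y) -` closure Q" by (rule closure_minimal[rotated])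
    then show ?thesis using that(1) by blast
  qed
  have cadd: "x + y \<in> closure Q" if "x \<in> closure Q" "y \<in> closure Q" for x y
  proof -
    have "closed ((\<lambda>y. x + y) -` closure Q)"
      by (rule continuous_closed_vimage) (auto intro!: continuous_intros)
    moreover have "Q \<subseteq> (\<lambda>y. x + y) -` closure Q" using cadd1 that(1) by blast
    ultimately have "closure Q \<subseteq> (\<lambda>y. x + y) -` closure Q" by (rule closure_minimal[rotated])
    then show ?thesis using that(2) by blast
  qed
  have csc1: "c *\<^sub>R x \<in> closure Q" if "x \<in> Q" for c x
  proof -
    have "closed ((\<lambda>c. c *\<^sub>R x) -` closure Q)"
      by (rule continuous_closed_vimage) (auto intro!: continuous_intros)
    moreover have "\<rat> \<subseteq> (\<lambda>c. c *\<^sub>R x) -` closure Q"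
    proof
      fix c :: real assume "c \<in> \<rat>"
      then obtain q where "c = real_of_rat q" by (auto elim: Rats_cases)
      then show "c \<in> (\<lambda>c. c *\<^sub>R x) -` closure Q" using Qsc[OF that] closure_subset by auto
    qed
    ultimately have "closure \<rat> \<subseteq> (\<lambda>c. c *\<^sub>R x) -` closure Q" by (rule closure_minimal[rotated])
    then show ?thesis using Rats_closure_real by blast
  qed
  have csc: "c *\<^sub>R x \<in> closure Q" if "x \<in> closure Q" for c x
  proof -
    have "closed ((\<lambda>x. c *\<^sub>R x) -` closure Q)"
      by (rule continuous_closed_vimage) (auto intro!: continuous_intros)
    moreover have "Q \<subseteq> (\<lambda>x. c *\<^sub>R x) -` closure Q" using csc1 by blast
    ultimately have "closure Q \<subseteq> (\<lambda>x. c *\<^sub>R x) -` closure Q" by (rule closure_minimal[rotated])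
    then show ?thesis using that by blast
  qed
  have sub: "subspace (closure Q)"
    unfolding subspace_def
  proof (intro conjI ballI allI)
    show "0 \<in> closure Q" using Q0 closure_subset by blast
  qed (use cadd csc in auto)
  have nm: "norming (closure Q)"
    unfolding norming_def
  proof
    fix x :: 'a
    define S where "S = {\<bar>blinfun_apply m x\<bar> | m. m \<in> closure Q \<and> norm m \<le> 1}"
    have bnd: "\<bar>blinfun_apply m x\<bar> \<le> norm x" if "norm m \<le> 1" for m :: "'a \<Rightarrow>\<^sub>L real"
    proof -
      have "\<bar>blinfun_apply m x\<bar> \<le> norm m * norm x" using norm_blinfun[of m x] by simp
      also have "\<dots> \<le> norm x" using that by (simp add: mult_left_le_one_le)
      finally show ?thesis .
    qed
    have Sne: "S \<noteq> {}" unfolding S_def using Q0 closure_subset[of Q] by auto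
    have Sbdd: "bdd_above S" unfolding S_def bdd_above_def by (rule exI[of _ "norm x"]) (use bnd in auto)
    have le: "Sup S \<le> norm x" by (rule cSup_least[OF Sne]) (use bnd S_def in auto)
    have ge: "norm x \<le> Sup S"
    proof (rule field_le_epsilon)
      fix e :: real assume e: "e > 0"
      obtain k where k: "dist x (d k) < e/2" using dense[of "e/2"] e by auto
      have "\<bar>blinfun_apply (\<phi> k) x\<bar> \<in> S" unfolding S_def using \<phi>Q[of k] \<phi>1[of k] closure_subset[of Q] by auto
      hence s1: "\<bar>blinfun_apply (\<phi> k) x\<bar> \<le> Sup S" using Sbdd by (simp add: cSup_upper)
      have "blinfun_apply (\<phi> k) x = norm (d k) + blinfun_apply (\<phi> k) (x - d k)"
        using \<phi>2[of k] by (simp add: blinfun.diff_right)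
      moreover have "\<bar>blinfun_apply (\<phi> k) (x - d k)\<bar> \<le> norm (x - d k)"
      proof -
        have "\<bar>blinfun_apply (\<phi> k) (x - d k)\<bar> \<le> norm (\<phi> k) * norm (x - d k)"
          using norm_blinfun[of "\<phi> k" "x - d k"] by simp
        also have "\<dots> \<le> norm (x - d k)" using \<phi>1[of k] by (simp add: mult_left_le_one_le)
        finally show ?thesis .
      qed
      moreover have "norm x \<le> norm (d k) + norm (x - d k)" by (metis norm_triangle_sub)
      moreover have "norm (x - d k) < e/2" using k by (simp add: dist_norm)
      ultimately show "norm x \<le> Sup S + e" using s1 by linarith
    qed
    show "norm x = Sup {\<bar>blinfun_apply m x\<bar> | m. m \<in> closure Q \<and> norm m \<le> 1}"
      using le ge S_def by simp
  qed
  have QU: "closure Q = UNIV" using P1 sub nm by blast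
  have "countable Q" unfolding Q_def by simp
  then have "separable_space (euclidean :: ('a \<Rightarrow>\<^sub>L real) topology)"
    unfolding separable_space_def using QU by (intro exI[of _ Q]) simp
  then show ?thesis using P1 by blast
qed

end
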